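(* Let $\psi:(0,\infty)\to(0,\infty)$ be continuous with $\int_0^\infty\psi(r)(1\wedge r^2)r^{d-1}dr<\infty$ and $\int_0^1r^{d-1}\psi(r)^{-1}dr<\infty$. Let $\gamma(r):=\inf_{0<s\le r+1}\psi(s)$, assume $\gamma(r)>0$ for all $r>0$ and $\int_{\{|x|\ge1\}}\frac{e^{-3V(x)}}{\gamma(|x|)}dx<\infty$. Suppose there is $\alpha_0\in(0,1)$ with $$\int_1^\infty r^{d+\alpha_0-1}\psi(r)dr<\infty\quad\text{and}\quad\limsup_{|x|\to\infty}\frac{\sup_{|z|\ge|x|}e^{-V(z)}}{\gamma(|x|)|x|^{\alpha_0}}=0.$$ Then there is $C_1>0$ such that for all $f\in C_b^\infty(\mathbb R^d)$, $$\int\big(f(x)-\mu_{2V}(f)\big)^2e^{V(x)}\gamma(|x|)\,\mu_{2V}(dx)\le C_1D_{\psi,V}(f,f).$$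
   Context: Let $d\ge1$. $V:\mathbb R^d\to\mathbb R$ is a locally bounded measurable function such that $e^{-V}$ is bounded and $\int e^{-V(x)}dx<\infty$. $\mu_{2V}(dx):=\frac{e^{-2V(x)}}{\int e^{-2V(y)}dy}dx$, $\mu_{2V}(f)=\int f\,d\mu_{2V}$. $C_b^\infty$ denotes smooth functions bounded with all derivatives. $D_{\psi,V}(f,f):=\frac12\iint(f(y)-f(x))^2\psi(|x-y|)e^{-V(y)}dy\,e^{-V(x)}dx$. *)

theory Defs
  imports "HOL-Analysis.Analysis"
begin

fun iter_dderiv :: "'a::euclidean_space list \<Rightarrow> ('a \<Rightarrow> real) \<Rightarrow> 'a \<Rightarrow> real" where
  "iter_dderiv [] f = f"
| "iter_dderiv (v # vs) f = (\<lambda>x. frechet_derivative (iter_dderiv vs f) (at x) v)"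

definition Cb_inf :: "('a::euclidean_space \<Rightarrow> real) set" where
  "Cb_inf = {f. \<forall>vs. (\<forall>x. iter_dderiv vs f differentiable (at x))
                     \<and> bounded (range (iter_dderiv vs f))}"

definition gamma_fn :: "(real \<Rightarrow> real) \<Rightarrow> real \<Rightarrow> real" where
  "gamma_fn \<psi> r = (INF s\<in>{0<..r+1}. \<psi> s)"

definition mu2V :: "('a::euclidean_space \<Rightarrow> real) \<Rightarrow> ('a \<Rightarrow> real) \<Rightarrow> real" where
  "mu2V V f = (\<integral>x. f x * exp (-2 * V x) \<partial>lborel) / (\<integral>y. exp (-2 * V y) \<partial>lborel)"

definition D_form :: "(real \<Rightarrow> real) \<Rightarrow> ('a::euclidean_space \<Rightarrow> real) \<Rightarrow> ('a \<Rightarrow> real) \<Rightarrow> ennreal" where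
  "D_form \<psi> V f = (\<integral>\<^sup>+x. (\<integral>\<^sup>+y. ennreal (1/2 * (f y - f x)^2 * \<psi> (norm (x - y))
                      * exp (- V y)) \<partial>lborel) * ennreal (exp (- V x)) \<partial>lborel)"

end

theory Submission
  imports Defs
begin

lemma ennreal_mult3:
  fixes a b c :: real
  assumes "0 \<le> a" "0 \<le> b" "0 \<le> c"
  shows "ennreal (a * b * c) = ennreal a * ennreal b * ennreal c"
  using assms by (simp add: ennreal_mult)

lemma CS_weighted:
  fixes g w :: "'b \<Rightarrow> real"
  assumes g: "integrable M g" and wm: "w \<in> borel_measurable M"
    and w0: "\<And>z. w z \<ge> 0" and wpos: "\<And>z. g z \<noteq> 0 \<Longrightarrow> w z > 0"
  shows "ennreal ((integral\<^sup>L M g)\<^sup>2)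
     \<le> (\<integral>\<^sup>+z. ennreal ((g z)\<^sup>2 * w z) \<partial>M) * (\<integral>\<^sup>+z. ennreal (1 / w z) \<partial>M)"
proof -
  have gm[measurable]: "g \<in> borel_measurable M" using g by auto
  note wm[measurable]
  have "ennreal ((integral\<^sup>L M g)\<^sup>2) = (ennreal (norm (integral\<^sup>L M g)))\<^sup>2"
    by (simp add: ennreal_power)
  also have "\<dots> \<le> (\<integral>\<^sup>+z. ennreal (norm (g z)) \<partial>M)\<^sup>2"
    by (intro power_mono integral_norm_bound_ennreal g) simp
  also have "(\<integral>\<^sup>+z. ennreal (norm (g z)) \<partial>M)
      = (\<integral>\<^sup>+z. ennreal (\<bar>g z\<bar> * sqrt (w z)) * ennreal (sqrt (1 / w z)) \<partial>M)"
  proof (intro nn_integral_cong)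
    fix z
    show "ennreal (norm (g z)) = ennreal (\<bar>g z\<bar> * sqrt (w z)) * ennreal (sqrt (1 / w z))"
    proof (cases "g z = 0")
      case True then show ?thesis by simp
    next
      case False
      then have "w z > 0" using wpos by auto
      then have "\<bar>g z\<bar> * sqrt (w z) * sqrt (1 / w z) = \<bar>g z\<bar>"
        by (simp add: real_sqrt_divide field_simps)
      moreover have "ennreal (\<bar>g z\<bar> * sqrt (w z)) * ennreal (sqrt (1 / w z)) = ennreal (\<bar>g z\<bar> * sqrt (w z) * sqrt (1 / w z))"
        using w0[of z] by (subst ennreal_mult) auto
      ultimately show ?thesis by (metis real_norm_def)
    qed
  qed
  also have "(\<dots>)\<^sup>2 \<le> (\<integral>\<^sup>+z. (ennreal (\<bar>g z\<bar> * sqrt (w z)))\<^sup>2 \<partial>M) * (\<integral>\<^sup>+z. (ennreal (sqrt (1 / w z)))\<^sup>2 \<partial>M)"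
    by (rule Cauchy_Schwarz_nn_integral) measurable
  also have "\<dots> = (\<integral>\<^sup>+z. ennreal ((g z)\<^sup>2 * w z) \<partial>M) * (\<integral>\<^sup>+z. ennreal (1 / w z) \<partial>M)"
    using w0 by (simp add: ennreal_power power_mult_distrib)
  finally show ?thesis .
qed

theorem theorem5p1:
  fixes V :: "'a::euclidean_space \<Rightarrow> real" and \<psi> :: "real \<Rightarrow> real" and \<alpha>\<^sub>0 :: real
  assumes V_meas: "V \<in> borel_measurable lborel"
    and V_locbdd: "\<And>K. compact K \<Longrightarrow> bounded (V ` K)"
    and V_expbdd: "bounded (range (\<lambda>x. exp (- V x)))"
    and V_int: "integrable lborel (\<lambda>x. exp (- V x))"
    and psi_cont: "continuous_on {0<..} \<psi>"
    and psi_pos: "\<And>r. r > 0 \<Longrightarrow> \<psi> r > 0"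
    and psi_int1: "set_integrable lborel {0<..}
                     (\<lambda>r. \<psi> r * min 1 (r^2) * r ^ (DIM('a) - 1))"
    and psi_int2: "set_integrable lborel {0<..1} (\<lambda>r. r ^ (DIM('a) - 1) / \<psi> r)"
    and gamma_pos: "\<And>r. r > 0 \<Longrightarrow> gamma_fn \<psi> r > 0"
    and V_gamma_int: "set_integrable lborel {x. norm x \<ge> 1}
                     (\<lambda>x. exp (-3 * V x) / gamma_fn \<psi> (norm x))"
    and alpha0: "0 < \<alpha>\<^sub>0" "\<alpha>\<^sub>0 < 1"
    and psi_int3: "set_integrable lborel {1..}
                     (\<lambda>r. r powr (real (DIM('a)) + \<alpha>\<^sub>0 - 1) * \<psi> r)"
    and limsup0: "Limsup at_infinity
                    (\<lambda>x::'a. ereal ((SUP z\<in>{z. norm z \<ge> norm x}. exp (- V z))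
                          / (gamma_fn \<psi> (norm x) * norm x powr \<alpha>\<^sub>0))) = 0"
  shows "\<exists>C1>0. \<forall>f\<in>Cb_inf.
           (\<integral>\<^sup>+x. ennreal ((f x - mu2V V f)^2 * exp (V x) * gamma_fn \<psi> (norm x)
                 * exp (-2 * V x) / (\<integral>y. exp (-2 * V y) \<partial>lborel)) \<partial>lborel)
           \<le> ennreal C1 * D_form \<psi> V f"
proof -
  define \<gamma> where "\<gamma> = gamma_fn \<psi>"
  note V_meas[measurable]
  have psi_bdd: "bdd_below (\<psi> ` {0<..r})" for r
    using psi_pos by (intro bdd_belowI[of _ 0]) (auto intro: less_imp_le)
  have g_le: "\<gamma> r \<le> \<psi> t" if "0 < t" "t \<le> r + 1" for r t
    unfolding \<gamma>_def gamma_fn_def using that psi_bdd by (intro cINF_lower) auto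
  have g_anti: "\<gamma> s \<le> \<gamma> r" if "0 \<le> r" "r \<le> s" for r s
    unfolding \<gamma>_def gamma_fn_def using that psi_bdd by (intro cINF_superset_mono) auto
  have g_pos: "\<gamma> r > 0" if "0 \<le> r" for r
  proof (cases "r = 0")
    case True
    have "\<gamma> 1 \<le> \<gamma> 0" by (rule g_anti) auto
    moreover have "\<gamma> 1 > 0" using gamma_pos[of 1] by (simp add: \<gamma>_def)
    ultimately show ?thesis using True by simp
  next
    case False then show ?thesis using that gamma_pos by (simp add: \<gamma>_def)
  qed
  have g_meas[measurable]: "(\<lambda>x::'a. \<gamma> (norm x)) \<in> borel_measurable lborel"
  proof -
    have "mono (\<lambda>r. - \<gamma> (max 0 r))"
      by (auto simp: mono_def intro!: g_anti)
    then have m: "(\<lambda>r. - \<gamma> (max 0 r)) \<in> borel_measurable borel" by (rule borel_measurable_mono)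
    have n: "(\<lambda>x::'a. norm x) \<in> borel_measurable lborel" by measurable
    have "(\<lambda>x::'a. - \<gamma> (max 0 (norm x))) \<in> borel_measurable lborel"
      using measurable_compose[OF n m] by simp
    then have "(\<lambda>x::'a. - (- \<gamma> (max 0 (norm x)))) \<in> borel_measurable lborel"
      by (rule borel_measurable_uminus)
    then show ?thesis by simp
  qed
  define \<psi>' where "\<psi>' = (\<lambda>r. if r \<in> {0<..} then \<psi> r else 0)"
  have psi'_meas[measurable]: "\<psi>' \<in> borel_measurable borel"
    unfolding \<psi>'_def by (rule borel_measurable_continuous_on_if) (auto intro: psi_cont continuous_on_const)
  obtain Mb where Mb: "\<And>x. exp (- V x) \<le> Mb"
    using V_expbdd unfolding bounded_iff by auto
  have int2: "integrable lborel (\<lambda>x. exp (-2 * V x))"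
  proof (rule Bochner_Integration.integrable_bound)
    show "integrable lborel (\<lambda>x. Mb * exp (- V x))" using V_int by auto
    show "AE x in lborel. norm (exp (-2 * V x)) \<le> norm (Mb * exp (- V x))"
    proof (intro AE_I2)
      fix x
      have "exp (-2 * V x) = exp (- V x) * exp (- V x)" by (simp add: mult_exp_exp)
      also have "\<dots> \<le> Mb * exp (- V x)" using Mb[of x] by (intro mult_right_mono) auto
      finally show "norm (exp (-2 * V x)) \<le> norm (Mb * exp (- V x))" by simp
    qed
  qed measurable
  define Z where "Z = (\<integral>y. exp (-2 * V y) \<partial>lborel)"
  have Zpos: "Z > 0"
  proof -
    have "Z \<ge> 0" unfolding Z_def by (intro integral_nonneg_AE) auto
    moreover have "Z \<noteq> 0"
    proof
      assume "Z = 0"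
      then have "AE x in lborel. exp (-2 * V x) = 0"
        using integral_nonneg_eq_0_iff_AE[OF int2] unfolding Z_def by auto
      then have "AE x in (lborel::'a measure). False" by simp
      then have "UNIV \<in> null_sets (lborel::'a measure)"
        using AE_iff_null_sets[of UNIV "lborel::'a measure"] by simp
      then show False by (auto dest: null_setsD1)
    qed
    ultimately show ?thesis by simp
  qed
  define B where "B = ball (0::'a) 1"
  define \<beta> where "\<beta> = measure lborel B"
  have B_sets[measurable]: "B \<in> sets lborel" unfolding B_def by simp
  have B_sets'[simp]: "B \<in> sets borel" unfolding B_def by simp
  have beta_pos: "\<beta> > 0" unfolding \<beta>_def B_def by simp
  have emB: "emeasure lborel B = ennreal \<beta>"
    unfolding \<beta>_def B_def using emeasure_lborel_ball_finite[of "0::'a" 1]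
    by (intro emeasure_eq_ennreal_measure) auto
  obtain MV where MV: "\<And>z. z \<in> B \<Longrightarrow> \<bar>V z\<bar> \<le> MV"
    using V_locbdd[of "cball 0 1"] unfolding bounded_iff B_def by force
  define e0 where "e0 = exp (- MV)"
  have e0_pos: "e0 > 0" unfolding e0_def by simp
  have e0_le: "e0 \<le> exp (- V z)" if "z \<in> B" for z
    unfolding e0_def using MV[OF that] by simp
  define c where "c = 2 / (\<beta> * Z * e0)"
  have c_pos: "c > 0" unfolding c_def using beta_pos Zpos e0_pos by simp
  define W where "W x = \<gamma> (norm x) * exp (- V x) / Z" for x :: 'a
  have W_nn: "W x \<ge> 0" for x unfolding W_def using g_pos[of "norm x"] Zpos by simp
  have W_meas[measurable]: "W \<in> borel_measurable lborel" unfolding W_def by measurable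
  define IW where "IW = (\<integral>\<^sup>+x. ennreal (W x) \<partial>lborel)"
  have Mb_pos: "Mb > 0" using Mb[of 0] by (meson exp_gt_zero less_le_trans)
  have int1_fin: "(\<integral>\<^sup>+x. ennreal (exp (- V x)) \<partial>lborel) < \<infinity>"
    using V_int unfolding integrable_iff_bounded by simp
  have IW_fin: "IW < \<infinity>"
  proof -
    have "IW \<le> (\<integral>\<^sup>+x. ennreal (\<gamma> 0 / Z) * ennreal (exp (- V x)) \<partial>lborel)"
      unfolding IW_def
    proof (intro nn_integral_mono)
      fix x :: 'a
      have "\<gamma> (norm x) \<le> \<gamma> 0" by (rule g_anti) auto
      then have "W x \<le> \<gamma> 0 / Z * exp (- V x)"
        unfolding W_def using Zpos by (simp add: divide_right_mono)
      then show "ennreal (W x) \<le> ennreal (\<gamma> 0 / Z) * ennreal (exp (- V x))"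
        using g_pos[of 0] Zpos by (simp add: ennreal_mult[symmetric])
    qed
    also have "\<dots> = ennreal (\<gamma> 0 / Z) * (\<integral>\<^sup>+x. ennreal (exp (- V x)) \<partial>lborel)"
      by (rule nn_integral_cmult) measurable
    also have "\<dots> < \<infinity>" using int1_fin by (simp add: ennreal_mult_less_top)
    finally show ?thesis .
  qed
  define K where "K = (\<integral>\<^sup>+x. ennreal (exp (-3 * V x) / (\<gamma> (norm x) * Z)) \<partial>lborel)"
  have K_fin: "K < \<infinity>"
  proof -
    define S where "S = {x::'a. norm x \<ge> 1}"
    define g where "g x = exp (-3 * V x) / \<gamma> (norm x)" for x :: 'a
    have S_sets[measurable]: "S \<in> sets lborel" unfolding S_def by measurable
    have g_meas[measurable]: "g \<in> borel_measurable lborel" unfolding g_def by measurable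
    define c2 where "c2 = Mb ^ 3 / (\<gamma> 1 * Z)"
    have c2_nn: "c2 \<ge> 0" unfolding c2_def using Mb_pos g_pos[of 1] Zpos by simp
    have fin1: "(\<integral>\<^sup>+x. ennreal (norm (indicator S x *\<^sub>R g x)) \<partial>lborel) < \<infinity>"
      using V_gamma_int unfolding set_integrable_def integrable_iff_bounded S_def g_def \<gamma>_def by simp
    have "K \<le> (\<integral>\<^sup>+x. ennreal (1 / Z) * ennreal (norm (indicator S x *\<^sub>R g x))
                 + ennreal c2 * indicator B x \<partial>lborel)"
      unfolding K_def
    proof (intro nn_integral_mono)
      fix x :: 'a
      have gp: "\<gamma> (norm x) > 0" using g_pos by simp
      show "ennreal (exp (-3 * V x) / (\<gamma> (norm x) * Z))
          \<le> ennreal (1 / Z) * ennreal (norm (indicator S x *\<^sub>R g x)) + ennreal c2 * indicator B x"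
      proof (cases "x \<in> S")
        case True
        have "exp (-3 * V x) / (\<gamma> (norm x) * Z) = 1 / Z * norm (indicator S x *\<^sub>R g x)"
          using True gp by (simp add: g_def)
        then show ?thesis using Zpos
          by (simp add: ennreal_mult[symmetric] del: real_norm_def norm_scaleR)
      next
        case False
        then have xB: "x \<in> B" unfolding S_def B_def by auto
        have "exp (-3 * V x) = exp (- V x) ^ 3" using exp_of_nat_mult[of 3 "- V x"] by simp
        also have "\<dots> \<le> Mb ^ 3" using Mb[of x] by (intro power_mono) auto
        finally have e3: "exp (-3 * V x) \<le> Mb ^ 3" .
        have "\<gamma> 1 \<le> \<gamma> (norm x)" using False unfolding S_def by (intro g_anti) auto
        then have "exp (-3 * V x) / (\<gamma> (norm x) * Z) \<le> c2"
          unfolding c2_def using e3 gp Zpos g_pos[of 1] Mb_pos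
          by (intro frac_le mult_right_mono) auto
        then have "ennreal (exp (-3 * V x) / (\<gamma> (norm x) * Z)) \<le> ennreal c2 * indicator B x"
          using xB by (simp add: ennreal_leI)
        then show ?thesis by (rule order_trans) simp
      qed
    qed
    also have "\<dots> = ennreal (1 / Z) * (\<integral>\<^sup>+x. ennreal (norm (indicator S x *\<^sub>R g x)) \<partial>lborel)
                 + ennreal c2 * emeasure lborel B"
      by (subst nn_integral_add) (auto simp: nn_integral_cmult nn_integral_indicator[OF B_sets])
    also have "\<dots> < \<infinity>" using fin1 emB by (simp add: ennreal_mult_less_top)
    finally show ?thesis .
  qed
  define C1 where "C1 = 2 * c + 2 * c * enn2real K * enn2real IW"
  have C1_pos: "C1 > 0" unfolding C1_def using c_pos by (simp add: add_pos_nonneg)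
  have C1_eq: "ennreal C1 = 2 * ennreal c + 2 * ennreal c * K * IW"
  proof -
    have "ennreal C1 = ennreal (2 * c) + ennreal (2 * c) * ennreal (enn2real K) * ennreal (enn2real IW)"
      unfolding C1_def using c_pos by (simp add: ennreal_mult ennreal_plus)
    also have "\<dots> = 2 * ennreal c + 2 * ennreal c * K * IW"
      using K_fin IW_fin c_pos by (simp add: ennreal_mult)
    finally show ?thesis .
  qed
  have psi'_eq: "(f y - f x)\<^sup>2 * \<psi> (norm (x - y)) = (f y - f x)\<^sup>2 * \<psi>' (norm (x - y))"
    for f :: "'a \<Rightarrow> real" and x y
    by (cases "x = y") (auto simp: \<psi>'_def)
  have H_nn: "0 \<le> 1/2 * (f y - f x)\<^sup>2 * \<psi> (norm (x - y)) * exp (- V y)"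
    for f :: "'a \<Rightarrow> real" and x y
  proof (cases "x = y")
    case False
    then have "\<psi> (norm (x - y)) > 0" using psi_pos by simp
    then show ?thesis by simp
  qed simp
  show ?thesis
  proof (intro exI[of _ C1] conjI ballI C1_pos)
    fix f :: "'a \<Rightarrow> real" assume fC: "f \<in> Cb_inf"
    from fC have "(\<forall>x. iter_dderiv [] f differentiable (at x)) \<and> bounded (range (iter_dderiv [] f))"
      unfolding Cb_inf_def by blast
    then have fd: "\<And>x. f differentiable (at x)" and fb: "bounded (range f)" by auto
    have fcont: "continuous_on UNIV f"
      using fd by (meson continuous_at_imp_continuous_on differentiable_imp_continuous_within)
    have fm[measurable]: "f \<in> borel_measurable lborel"
      using borel_measurable_continuous_onI[OF fcont] by simp
    obtain Kf where Kf: "\<And>x. \<bar>f x\<bar> \<le> Kf" using fb unfolding bounded_iff by auto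
    have Kf0: "Kf \<ge> 0" using Kf[of 0] by linarith
    define a where "a = mu2V V f"
    define m where "m = (\<integral>z. indicator B z * f z \<partial>lborel) / \<beta>"
    define I where "I x = (\<integral>\<^sup>+z. ennreal (indicator B z * (f x - f z)\<^sup>2) \<partial>lborel)" for x
    define Dx where "Dx x = (\<integral>\<^sup>+y. ennreal (1/2 * (f y - f x)^2 * \<psi> (norm (x - y)) * exp (- V y)) \<partial>lborel)" for x
    have intB: "integrable lborel (\<lambda>z. indicator B z * f z)"
    proof (rule Bochner_Integration.integrable_bound)
      show "integrable lborel (\<lambda>z. Kf * indicator B z)"
        using emB by (intro integrable_mult_right integrable_real_indicator) auto
      show "AE z in lborel. norm (indicator B z * f z) \<le> norm (Kf * indicator B z)"
        using Kf Kf0 by (intro AE_I2) (auto simp: indicator_def abs_mult)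
    qed simp
    have P1: "ennreal ((f x - m)\<^sup>2) \<le> ennreal (1/\<beta>) * I x" for x
    proof -
      define gz where "gz z = indicator B z * (f x - f z)" for z
      have gz_int: "integrable lborel gz"
      proof (rule Bochner_Integration.integrable_bound)
        show "integrable lborel (\<lambda>z. (\<bar>f x\<bar> + Kf) * indicator B z)"
          using emB by (intro integrable_mult_right integrable_real_indicator) auto
        show "AE z in lborel. norm (gz z) \<le> norm ((\<bar>f x\<bar> + Kf) * indicator B z)"
        proof (intro AE_I2)
          fix z
          have "\<bar>f x - f z\<bar> \<le> \<bar>f x\<bar> + Kf" using Kf[of z] by linarith
          moreover have "Kf \<ge> 0" using Kf[of z] by linarith
          ultimately show "norm (gz z) \<le> norm ((\<bar>f x\<bar> + Kf) * indicator B z)"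
            by (auto simp: gz_def indicator_def)
        qed
      qed (unfold gz_def, measurable)
      have CS: "ennreal ((integral\<^sup>L lborel gz)\<^sup>2) \<le> (\<integral>\<^sup>+z. ennreal ((gz z)\<^sup>2 * indicator B z) \<partial>lborel) * (\<integral>\<^sup>+z. ennreal (1 / indicator B z) \<partial>lborel)"
        by (rule CS_weighted[OF gz_int]) (auto simp: gz_def indicator_def)
      have e1: "(\<integral>\<^sup>+z. ennreal ((gz z)\<^sup>2 * indicator B z) \<partial>lborel) = I x"
        unfolding I_def gz_def by (intro nn_integral_cong) (simp add: indicator_def power2_eq_square)
      have "(\<integral>\<^sup>+z. ennreal (1 / indicator B z) \<partial>lborel) = (\<integral>\<^sup>+z. indicator B z \<partial>lborel)"
        by (intro nn_integral_cong) (simp add: indicator_def)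
      also have "\<dots> = ennreal \<beta>" using emB by (simp add: nn_integral_indicator[OF B_sets])
      finally have e2: "(\<integral>\<^sup>+z. ennreal (1 / indicator B z) \<partial>lborel) = ennreal \<beta>" .
      have igz: "integral\<^sup>L lborel gz = \<beta> * (f x - m)"
      proof -
        have "integral\<^sup>L lborel gz = (\<integral>z. f x * indicator B z - indicator B z * f z \<partial>lborel)"
          by (intro Bochner_Integration.integral_cong) (auto simp: gz_def algebra_simps)
        also have "\<dots> = f x * \<beta> - (\<integral>z. indicator B z * f z \<partial>lborel)"
          using emB intB by (subst Bochner_Integration.integral_diff) (auto simp: \<beta>_def)
        also have "\<dots> = \<beta> * (f x - m)" unfolding m_def using beta_pos by (simp add: field_simps)
        finally show ?thesis .
      qed
      have "ennreal ((f x - m)\<^sup>2) = ennreal (1/\<beta>\<^sup>2) * ennreal ((integral\<^sup>L lborel gz)\<^sup>2)"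
        unfolding igz using beta_pos by (simp add: ennreal_mult[symmetric] power_mult_distrib)
      also have "\<dots> \<le> ennreal (1/\<beta>\<^sup>2) * (I x * ennreal \<beta>)"
        using CS e1 e2 by (intro mult_left_mono) auto
      also have "\<dots> = (ennreal (1/\<beta>\<^sup>2) * ennreal \<beta>) * I x" by (simp add: ac_simps)
      also have "ennreal (1/\<beta>\<^sup>2) * ennreal \<beta> = ennreal (1/\<beta>)"
        using beta_pos by (simp add: ennreal_mult[symmetric] power2_eq_square)
      finally show ?thesis .
    qed
    have ker: "1/\<beta> * (indicator B z * (f x - f z)\<^sup>2) * W x
        \<le> c * (1/2 * (f z - f x)^2 * \<psi> (norm (x - z)) * exp (- V z)) * exp (- V x)" for x z
    proof -
      have sq: "(f z - f x)\<^sup>2 = (f x - f z)\<^sup>2" by (simp add: power2_commute)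
      show ?thesis
      proof (cases "z \<in> B \<and> x \<noteq> z")
        case True
        then have n0: "0 < norm (x - z)" by simp
        have "norm (x - z) \<le> norm x + 1" using True norm_triangle_ineq4[of x z] unfolding B_def by auto
        then have gl: "\<gamma> (norm x) \<le> \<psi> (norm (x - z))" using g_le n0 by auto
        have e: "e0 \<le> exp (- V z)" using True e0_le by auto
        have gp: "0 < \<gamma> (norm x)" using g_pos by simp
        have "\<gamma> (norm x) * e0 \<le> \<psi> (norm (x - z)) * exp (- V z)"
          using gl e gp e0_pos by (intro mult_mono) auto
        then have "(f x - f z)\<^sup>2 * exp (- V x) * (\<gamma> (norm x) * e0)
            \<le> (f x - f z)\<^sup>2 * exp (- V x) * (\<psi> (norm (x - z)) * exp (- V z))"
          by (intro mult_left_mono) auto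
        then have "(f x - f z)\<^sup>2 * exp (- V x) * (\<gamma> (norm x) * e0) / (\<beta> * Z * e0)
            \<le> (f x - f z)\<^sup>2 * exp (- V x) * (\<psi> (norm (x - z)) * exp (- V z)) / (\<beta> * Z * e0)"
          using beta_pos Zpos e0_pos by (intro divide_right_mono) auto
        moreover have "1/\<beta> * (indicator B z * (f x - f z)\<^sup>2) * W x
            = (f x - f z)\<^sup>2 * exp (- V x) * (\<gamma> (norm x) * e0) / (\<beta> * Z * e0)"
          using True e0_pos unfolding W_def by (simp add: field_simps)
        moreover have "c * (1/2 * (f z - f x)^2 * \<psi> (norm (x - z)) * exp (- V z)) * exp (- V x)
            = (f x - f z)\<^sup>2 * exp (- V x) * (\<psi> (norm (x - z)) * exp (- V z)) / (\<beta> * Z * e0)"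
          unfolding c_def sq by (simp add: field_simps)
        ultimately show ?thesis by simp
      next
        case False
        have l0: "1/\<beta> * (indicator B z * (f x - f z)\<^sup>2) * W x = 0"
          using False by (auto simp: indicator_def)
        have "0 \<le> c * (1/2 * (f z - f x)^2 * \<psi> (norm (x - z)) * exp (- V z)) * exp (- V x)"
          using H_nn[of f z x] c_pos by simp
        then show ?thesis unfolding l0 .
      qed
    qed
    have Heq: "ennreal (1/2 * (f y - f x)^2 * \<psi> (norm (x - y)) * exp (- V y))
       = ennreal (1/2 * ((f y - f x)^2 * \<psi>' (norm (x - y))) * exp (- V y))" for x y
      using psi'_eq[of f y x] by (metis mult.assoc)
    have Hm: "(\<lambda>y. ennreal (1/2 * (f y - f x)^2 * \<psi> (norm (x - y)) * exp (- V y))) \<in> borel_measurable lborel" for x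
    proof -
      have "(\<lambda>y. ennreal (1/2 * ((f y - f x)^2 * \<psi>' (norm (x - y))) * exp (- V y))) \<in> borel_measurable lborel"
        by measurable
      then show ?thesis unfolding Heq .
    qed
    have Dm: "(\<lambda>x. Dx x * ennreal (exp (- V x))) \<in> borel_measurable lborel"
    proof -
      have "(\<lambda>x. (\<integral>\<^sup>+y. ennreal (1/2 * ((f y - f x)^2 * \<psi>' (norm (x - y))) * exp (- V y)) \<partial>lborel)
              * ennreal (exp (- V x))) \<in> borel_measurable lborel"
        by measurable
      then show ?thesis unfolding Dx_def Heq .
    qed
    have P3: "ennreal ((f x - m)\<^sup>2 * W x) \<le> ennreal c * (Dx x * ennreal (exp (- V x)))" for x
    proof -
      have "ennreal ((f x - m)\<^sup>2 * W x) = ennreal ((f x - m)\<^sup>2) * ennreal (W x)"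
        using W_nn by (simp add: ennreal_mult)
      also have "\<dots> \<le> ennreal (1/\<beta>) * I x * ennreal (W x)" by (intro mult_right_mono P1) simp
      also have "\<dots> = (\<integral>\<^sup>+z. ennreal (1/\<beta>) * ennreal (indicator B z * (f x - f z)\<^sup>2) \<partial>lborel) * ennreal (W x)"
        unfolding I_def by (subst nn_integral_cmult) measurable
      also have "\<dots> = (\<integral>\<^sup>+z. ennreal (1/\<beta>) * ennreal (indicator B z * (f x - f z)\<^sup>2) * ennreal (W x) \<partial>lborel)"
        by (rule nn_integral_multc[symmetric]) measurable
      also have "\<dots> = (\<integral>\<^sup>+z. ennreal (1/\<beta> * (indicator B z * (f x - f z)\<^sup>2) * W x) \<partial>lborel)"
        using beta_pos W_nn by (intro nn_integral_cong ennreal_mult3[symmetric]) auto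
      also have "\<dots> \<le> (\<integral>\<^sup>+z. ennreal (c * (1/2 * (f z - f x)^2 * \<psi> (norm (x - z)) * exp (- V z)) * exp (- V x)) \<partial>lborel)"
        by (intro nn_integral_mono ennreal_leI ker)
      also have "\<dots> = (\<integral>\<^sup>+z. ennreal c * ennreal (1/2 * (f z - f x)^2 * \<psi> (norm (x - z)) * exp (- V z)) * ennreal (exp (- V x)) \<partial>lborel)"
        using c_pos H_nn by (intro nn_integral_cong ennreal_mult3) auto
      also have "\<dots> = (\<integral>\<^sup>+z. ennreal c * ennreal (1/2 * (f z - f x)^2 * \<psi> (norm (x - z)) * exp (- V z)) \<partial>lborel) * ennreal (exp (- V x))"
        using Hm[of x] by (intro nn_integral_multc borel_measurable_times_ennreal borel_measurable_const)
      also have "\<dots> = ennreal c * (Dx x * ennreal (exp (- V x)))"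
        unfolding Dx_def using Hm[of x] by (subst nn_integral_cmult) (auto simp: ac_simps)
      finally show ?thesis .
    qed
    define T where "T = (\<integral>\<^sup>+x. ennreal ((f x - m)\<^sup>2 * W x) \<partial>lborel)"
    have T_le: "T \<le> ennreal c * D_form \<psi> V f"
    proof -
      have "T \<le> (\<integral>\<^sup>+x. ennreal c * (Dx x * ennreal (exp (- V x))) \<partial>lborel)"
        unfolding T_def by (intro nn_integral_mono P3)
      also have "\<dots> = ennreal c * (\<integral>\<^sup>+x. Dx x * ennreal (exp (- V x)) \<partial>lborel)"
        by (rule nn_integral_cmult[OF Dm])
      also have "(\<integral>\<^sup>+x. Dx x * ennreal (exp (- V x)) \<partial>lborel) = D_form \<psi> V f"
        unfolding D_form_def Dx_def ..
      finally show ?thesis .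
    qed
    have P2: "ennreal ((m - a)\<^sup>2) \<le> T * K"
    proof -
      define g where "g y = m / Z * exp (-2 * V y) - f y * exp (-2 * V y) / Z" for y
      define w where "w y = \<gamma> (norm y) * Z * exp (3 * V y)" for y :: 'a
      have intf: "integrable lborel (\<lambda>y. f y * exp (-2 * V y))"
      proof (rule Bochner_Integration.integrable_bound)
        show "integrable lborel (\<lambda>y. Kf * exp (-2 * V y))" using int2 by auto
        show "AE y in lborel. norm (f y * exp (-2 * V y)) \<le> norm (Kf * exp (-2 * V y))"
          using Kf Kf0 by (intro AE_I2) (auto simp: abs_mult intro!: mult_right_mono)
      qed measurable
      have g_int: "integrable lborel g"
        unfolding g_def using intf int2 by auto
      have ig: "integral\<^sup>L lborel g = m - a"
      proof -
        have "integral\<^sup>L lborel g = m / Z * Z - (\<integral>y. f y * exp (-2 * V y) \<partial>lborel) / Z"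
          unfolding g_def using intf int2 by (simp add: Z_def)
        also have "\<dots> = m - a" unfolding a_def mu2V_def Z_def[symmetric] using Zpos by simp
        finally show ?thesis .
      qed
      have wpos: "w y > 0" for y unfolding w_def using g_pos[of "norm y"] Zpos by simp
      have wm: "w \<in> borel_measurable lborel" unfolding w_def by measurable
      have CS: "ennreal ((integral\<^sup>L lborel g)\<^sup>2) \<le> (\<integral>\<^sup>+y. ennreal ((g y)\<^sup>2 * w y) \<partial>lborel) * (\<integral>\<^sup>+y. ennreal (1 / w y) \<partial>lborel)"
        by (rule CS_weighted[OF g_int wm]) (use wpos less_imp_le in auto)
      have e1: "(\<integral>\<^sup>+y. ennreal ((g y)\<^sup>2 * w y) \<partial>lborel) = T"
        unfolding T_def
      proof (intro nn_integral_cong arg_cong[where f=ennreal])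
        fix y
        have ee: "exp (-2 * V y) * exp (-2 * V y) * exp (3 * V y) = exp (-2 * V y + -2 * V y + 3 * V y)"
          by (simp only: exp_add)
        have ee2: "exp (-2 * V y) * exp (-2 * V y) * exp (3 * V y) = exp (- V y)"
          unfolding ee by (intro arg_cong[where f=exp]) simp
        have "(g y)\<^sup>2 * w y = (f y - m)\<^sup>2 * \<gamma> (norm y) * (exp (-2 * V y) * exp (-2 * V y) * exp (3 * V y)) / Z"
          unfolding g_def w_def using Zpos by (simp add: power2_eq_square field_simps)
        also have "\<dots> = (f y - m)\<^sup>2 * W y" unfolding ee2 W_def by simp
        finally show "(g y)\<^sup>2 * w y = (f y - m)\<^sup>2 * W y" .
      qed
      have e2: "(\<integral>\<^sup>+y. ennreal (1 / w y) \<partial>lborel) = K"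
        unfolding K_def
      proof (intro nn_integral_cong arg_cong[where f=ennreal])
        fix y
        have "exp (-3 * V y) = 1 / exp (3 * V y)" by (simp add: exp_minus field_simps)
        then show "1 / w y = exp (-3 * V y) / (\<gamma> (norm y) * Z)" unfolding w_def by simp
      qed
      show ?thesis using CS unfolding e1 e2 ig .
    qed
    have LHS_le: "ennreal ((f x - a)\<^sup>2 * exp (V x) * \<gamma> (norm x) * exp (-2 * V x) / Z)
        \<le> 2 * ennreal ((f x - m)\<^sup>2 * W x) + ennreal (2 * (m - a)\<^sup>2) * ennreal (W x)" for x
    proof -
      have "exp (V x) * exp (-2 * V x) = exp (- V x)" by (simp add: mult_exp_exp)
      then have eq: "(f x - a)\<^sup>2 * exp (V x) * \<gamma> (norm x) * exp (-2 * V x) / Z = (f x - a)\<^sup>2 * W x"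
        unfolding W_def by (simp add: field_simps)
      have id: "(f x - a)\<^sup>2 = 2 * (f x - m)\<^sup>2 + 2 * (m - a)\<^sup>2 - (f x - m - (m - a))\<^sup>2"
        by (simp add: power2_eq_square algebra_simps)
      have "(f x - a)\<^sup>2 \<le> 2 * (f x - m)\<^sup>2 + 2 * (m - a)\<^sup>2"
        unfolding id by simp
      then have "(f x - a)\<^sup>2 * W x \<le> (2 * (f x - m)\<^sup>2 + 2 * (m - a)\<^sup>2) * W x"
        using W_nn by (intro mult_right_mono) auto
      then have "ennreal ((f x - a)\<^sup>2 * W x) \<le> ennreal (2 * ((f x - m)\<^sup>2 * W x) + 2 * (m - a)\<^sup>2 * W x)"
        by (intro ennreal_leI) (simp add: algebra_simps)
      also have "\<dots> = 2 * ennreal ((f x - m)\<^sup>2 * W x) + ennreal (2 * (m - a)\<^sup>2) * ennreal (W x)"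
        using W_nn by (simp add: ennreal_plus ennreal_mult)
      finally show ?thesis unfolding eq .
    qed
    have "(\<integral>\<^sup>+x. ennreal ((f x - mu2V V f)\<^sup>2 * exp (V x) * gamma_fn \<psi> (norm x) * exp (-2 * V x) / (\<integral>y. exp (-2 * V y) \<partial>lborel)) \<partial>lborel)
       \<le> (\<integral>\<^sup>+x. 2 * ennreal ((f x - m)\<^sup>2 * W x) + ennreal (2 * (m - a)\<^sup>2) * ennreal (W x) \<partial>lborel)"
      unfolding \<gamma>_def[symmetric] Z_def[symmetric] a_def[symmetric] by (intro nn_integral_mono LHS_le)
    also have "\<dots> = 2 * T + ennreal (2 * (m - a)\<^sup>2) * IW"
      unfolding T_def IW_def by (subst nn_integral_add) (auto simp: nn_integral_cmult)
    also have "\<dots> \<le> 2 * (ennreal c * D_form \<psi> V f) + 2 * (ennreal c * D_form \<psi> V f * K) * IW"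
    proof (intro add_mono mult_left_mono mult_right_mono T_le)
      have "ennreal (2 * (m - a)\<^sup>2) = 2 * ennreal ((m - a)\<^sup>2)" by (simp add: ennreal_mult)
      also have "\<dots> \<le> 2 * (T * K)" by (intro mult_left_mono P2) simp
      also have "\<dots> \<le> 2 * (ennreal c * D_form \<psi> V f * K)" by (intro mult_left_mono mult_right_mono T_le) auto
      finally show "ennreal (2 * (m - a)\<^sup>2) \<le> 2 * (ennreal c * D_form \<psi> V f * K)" .
    qed auto
    also have "\<dots> = ennreal C1 * D_form \<psi> V f"
      unfolding C1_eq by (simp add: algebra_simps)
    finally show "(\<integral>\<^sup>+x. ennreal ((f x - mu2V V f)\<^sup>2 * exp (V x) * gamma_fn \<psi> (norm x) * exp (-2 * V x) / (\<integral>y. exp (-2 * V y) \<partial>lborel)) \<partial>lborel)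
       \<le> ennreal C1 * D_form \<psi> V f" .
  qed
qed

end
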